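(* Let $n\ge1$, $I=\{1,\dots,n\}$, let $A=(a_{ij})_{n\times n}$ be a symmetric real matrix with $a_{ij}\ge0$ for all $i,j$, and let $\boldsymbol\beta=(\beta_1,\dots,\beta_n)$, $\beta_i>0$, satisfy $\Lambda_I(\boldsymbol\beta)=0$ and $\Lambda_J(\boldsymbol\beta)>0$ for all $\emptyset\ne J\subsetneq I$. Then $\mathcal F_0$ does not attain its infimum on $\Gamma^{\boldsymbol\beta}$.
   Context: For $\emptyset\ne J\subseteq I$, $\Lambda_J(\boldsymbol\beta)=\sum_{i\in J}\beta_i\big(8\pi-\sum_{j\in J}a_{ij}\beta_j\big)$. $\Gamma^{\boldsymbol\beta}$ is the set of $n$-tuples $\boldsymbol\rho=(\rho_1,\dots,\rho_n)$ of measurable functions on $\mathbb R^2$ with $\rho_i\ge0$, $\int\rho_i\ln\rho_i<\infty$, $\int|x|^2\rho_i<\infty$, $\int\rho_i=\beta_i$ for all $i$. $\mathcal F_0(\boldsymbol\rho)=\sum_{i=1}^n\int_{\mathbb R^2}\rho_i\ln\rho_i+\frac1{4\pi}\sum_{i,j=1}^na_{ij}\int\int\rho_i(x)\ln|x-y|\rho_j(y)\,d^2x\,d^2y+\sum_{i=1}^n\frac12\int_{\mathbb R^2}|x|^2\rho_i(x)\,d^2x.$ *)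

theory Defs
  imports "HOL-Analysis.Analysis"
begin

type_synonym R2 = "real^2"

definition Lambda :: "(nat \<Rightarrow> nat \<Rightarrow> real) \<Rightarrow> nat set \<Rightarrow> (nat \<Rightarrow> real) \<Rightarrow> real" where
  "Lambda a J \<beta> = (\<Sum>i\<in>J. \<beta> i * (8 * pi - (\<Sum>j\<in>J. a i j * \<beta> j)))"

definition Gamma :: "nat \<Rightarrow> (nat \<Rightarrow> real) \<Rightarrow> (nat \<Rightarrow> R2 \<Rightarrow> real) set" where
  "Gamma n \<beta> = {\<rho>. \<forall>i\<in>{1..n}.
      \<rho> i \<in> borel_measurable lborel \<and>
      (\<forall>x. 0 \<le> \<rho> i x) \<and>
      integrable lborel (\<lambda>x. \<rho> i x * ln (\<rho> i x)) \<and>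
      integrable lborel (\<lambda>x. (norm x)\<^sup>2 * \<rho> i x) \<and>
      integrable lborel (\<rho> i) \<and>
      (\<integral>x. \<rho> i x \<partial>lborel) = \<beta> i}"

definition F0 :: "nat \<Rightarrow> (nat \<Rightarrow> nat \<Rightarrow> real) \<Rightarrow> (nat \<Rightarrow> R2 \<Rightarrow> real) \<Rightarrow> real" where
  "F0 n a \<rho> =
     (\<Sum>i\<in>{1..n}. \<integral>x. \<rho> i x * ln (\<rho> i x) \<partial>lborel)
   + 1 / (4 * pi) * (\<Sum>i\<in>{1..n}. \<Sum>j\<in>{1..n}. a i j *
        (\<integral>z. \<rho> i (fst z) * ln (norm (fst z - snd z)) * \<rho> j (snd z)
            \<partial>(lborel \<Otimes>\<^sub>M lborel)))
   + (\<Sum>i\<in>{1..n}. 1/2 * (\<integral>x. (norm x)\<^sup>2 * \<rho> i x \<partial>lborel))"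

end

theory Submission
  imports Defs
begin

lemma nn_integral_eucl_affine:
  fixes f :: "'a::euclidean_space \<Rightarrow> ennreal" and c :: real
  assumes [measurable]: "f \<in> borel_measurable borel" and c: "c \<noteq> 0"
  shows "(\<integral>\<^sup>+x. f x \<partial>lborel) = ennreal (\<bar>c\<bar>^DIM('a)) * (\<integral>\<^sup>+x. f (t + c *\<^sub>R x) \<partial>lborel)"
  by (subst lborel_affine[OF c, of t])
     (simp add: nn_integral_density nn_integral_distr nn_integral_cmult)

lemma integrable_eucl_affine:
  fixes f :: "'a::euclidean_space \<Rightarrow> real"
  assumes f: "integrable lborel f" and c: "c \<noteq> 0"
  shows "integrable lborel (\<lambda>x. f (t + c *\<^sub>R x))"
  using f f[THEN borel_measurable_integrable] unfolding integrable_iff_bounded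
  by (subst (asm) nn_integral_eucl_affine[where c=c and t=t]) (auto simp: ennreal_mult_less_top c)

lemma integral_eucl_affine:
  fixes f :: "'a::euclidean_space \<Rightarrow> real" and c :: real
  assumes c: "c \<noteq> 0" and f[measurable]: "integrable lborel f"
  shows "(\<integral>x. f x \<partial> lborel) = \<bar>c\<bar>^DIM('a) * (\<integral>x. f (t + c *\<^sub>R x) \<partial>lborel)"
    using c f f[THEN borel_measurable_integrable] f[THEN integrable_eucl_affine, of c t]
    by (subst lborel_affine[OF c, of t])
       (simp add: integral_density integral_distr)

definition kern :: "R2 \<Rightarrow> real" where
  "kern z = (if 0 < norm z \<and> norm z < 1 then norm z powr (-1/2) else 0)"

lemma kern_nonneg: "0 \<le> kern z" by (simp add: kern_def)

lemma kern_meas[measurable]: "kern \<in> borel_measurable borel"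
  unfolding kern_def by measurable

lemma g1_integrable: "integrable lborel (\<lambda>s::real. indicator {0..1} s * s powr (-1/4))"
proof -
  have hi: "((\<lambda>x::real. x powr (-1/4)) has_integral (1 powr (-1/4+1) / (-1/4+1))) {0..1}"
    by (rule has_integral_powr_from_0) auto
  then have hU: "((\<lambda>x::real. indicator {0..1} x * x powr (-1/4)) has_integral (4/3)) UNIV"
  proof -
    have "(\<lambda>x::real. indicator {0..1} x * x powr (-1/4)) = (\<lambda>x. if x \<in> {0..1} then x powr (-1/4) else 0)"
      by (auto simp: indicator_def)
    then show ?thesis using has_integral_restrict_UNIV[where f="\<lambda>x::real. x powr (-1/4)" and s="{0..1}"] hi
      by simp
  qed
  then have "(\<integral>\<^sup>+x. ennreal (indicator {0..1} x * x powr (-1/4)) \<partial>lborel) = ennreal (4/3)"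
  proof -
    have m: "(\<lambda>x::real. indicator {0..1} x * x powr (-1/4)) \<in> borel_measurable borel" by measurable
    show ?thesis using nn_integral_has_integral_lborel[OF m _ hU] by (simp add: o_def)
  qed
  then show ?thesis
    by (intro integrableI_nn_integral_finite[where x="4/3"]) auto
qed

lemma g_integrable: "integrable lborel (\<lambda>s::real. indicator {-1..1} s * \<bar>s\<bar> powr (-1/4))"
proof -
  let ?g1 = "\<lambda>s::real. indicator {0..1} s * s powr (-1/4)"
  have "integrable lborel (\<lambda>s. ?g1 (0 + (-1) *\<^sub>R s))"
    by (rule integrable_eucl_affine[OF g1_integrable]) auto
  then have i: "integrable lborel (\<lambda>s. ?g1 s + ?g1 (-s))"
    using g1_integrable by auto
  have m: "(\<lambda>s::real. indicator {-1..1} s * \<bar>s\<bar> powr (-1/4)) \<in> borel_measurable lborel"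
    by measurable
  have "AE x in lborel. norm (indicator {-1..1} x * \<bar>x\<bar> powr (-1/4)) \<le> norm (?g1 x + ?g1 (-x))"
    by (auto simp: indicator_def)
  then show ?thesis by (rule Bochner_Integration.integrable_bound[OF i m])
qed

definition hfun :: "real \<Rightarrow> ennreal" where
  "hfun s = (if s = 0 then \<infinity> else ennreal (indicator {-1..1} s * \<bar>s\<bar> powr (-1/4)))"

lemma hfun_meas[measurable]: "hfun \<in> borel_measurable borel"
  unfolding hfun_def by measurable

lemma hfun_finite: "(\<integral>\<^sup>+s. hfun s \<partial>lborel) < \<infinity>"
proof -
  have "(\<integral>\<^sup>+s. hfun s \<partial>lborel) = (\<integral>\<^sup>+s. ennreal (norm (indicator {-1..1} s * \<bar>s::real\<bar> powr (-1/4))) \<partial>lborel)"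
    by (intro nn_integral_cong_AE) (use AE_lborel_singleton[of 0] in \<open>auto simp: hfun_def indicator_def\<close>)
  also have "\<dots> < \<infinity>" using g_integrable unfolding integrable_iff_bounded by blast
  finally show ?thesis .
qed

lemma prod_mono_ennreal:
  fixes f g :: "'a \<Rightarrow> ennreal"
  shows "(\<And>i. i \<in> A \<Longrightarrow> f i \<le> g i) \<Longrightarrow> prod f A \<le> prod g A"
  by (induct A rule: infinite_finite_induct) (auto intro!: mult_mono)

lemma kern_le_prod:
  fixes z :: R2
  shows "ennreal (kern z) \<le> (\<Prod>b\<in>Basis. hfun (z \<bullet> b))"
proof (cases "0 < norm z \<and> norm z < 1")
  case True
  have hb: "\<forall>b\<in>Basis. ennreal (norm z powr (-1/4)) \<le> hfun (z \<bullet> b)"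
  proof
    fix b :: R2 assume b: "b \<in> Basis"
    show "ennreal (norm z powr (-1/4)) \<le> hfun (z \<bullet> b)"
    proof (cases "z \<bullet> b = 0")
      case False
      have le: "\<bar>z \<bullet> b\<bar> \<le> norm z" using Basis_le_norm[OF b] .
      then have "norm z powr (-1/4) \<le> \<bar>z \<bullet> b\<bar> powr (-1/4)"
        using False by (intro powr_mono2') auto
      moreover have "\<bar>z \<bullet> b\<bar> \<le> 1" using le True by auto
      ultimately show ?thesis using False by (auto simp: hfun_def indicator_def)
    qed (simp add: hfun_def)
  qed
  have "(\<Prod>b\<in>(Basis::R2 set). ennreal (norm z powr (-1/4))) \<le> (\<Prod>b\<in>Basis. hfun (z \<bullet> b))"
    by (rule prod_mono_ennreal) (use hb in blast)
  moreover have "(\<Prod>b\<in>(Basis::R2 set). ennreal (norm z powr (-1/4))) = ennreal (norm z powr (-1/2))"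
  proof -
    have "(\<Prod>b\<in>(Basis::R2 set). ennreal (norm z powr (-1/4))) = ennreal (norm z powr (-1/4)) ^ 2"
      by simp
    also have "\<dots> = ennreal ((norm z powr (-1/4))^2)" by (simp add: ennreal_power)
    also have "(norm z powr (-1/4))^2 = norm z powr (-1/2)"
      by (simp add: powr_powr[symmetric] power2_eq_square powr_add[symmetric])
    finally show ?thesis .
  qed
  ultimately show ?thesis using True by (simp add: kern_def)
qed (auto simp add: kern_def)

lemma kern_integrable: "integrable lborel kern"
  unfolding integrable_iff_bounded
proof
  show "kern \<in> borel_measurable lborel" by measurable
  have "(\<integral>\<^sup>+z. ennreal (norm (kern z)) \<partial>lborel) \<le> (\<integral>\<^sup>+z. (\<Prod>b\<in>(Basis::R2 set). hfun (z \<bullet> b)) \<partial>lborel)"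
    by (intro nn_integral_mono) (use kern_le_prod kern_nonneg in auto)
  also have "\<dots> = (\<Prod>b\<in>(Basis::R2 set). (\<integral>\<^sup>+s. hfun s \<partial>lborel))"
    by (rule nn_integral_lborel_prod) auto
  also have "\<dots> < \<infinity>"
    using hfun_finite by (simp add: power_less_top_ennreal)
  finally show "(\<integral>\<^sup>+z. ennreal (norm (kern z)) \<partial>lborel) < \<infinity>" .
qed

definition good :: "(R2 \<Rightarrow> real) \<Rightarrow> bool" where
  "good p \<longleftrightarrow> p \<in> borel_measurable lborel \<and> (\<forall>x. 0 \<le> p x) \<and> integrable lborel p \<and>
     integrable lborel (\<lambda>x. p x * ln (p x)) \<and> integrable lborel (\<lambda>x. (norm x)\<^sup>2 * p x)"

lemma young: "0 \<le> (q::real) \<Longrightarrow> q * b \<le> q * ln q - q + exp b"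
proof (cases "q = 0")
  case False
  assume q: "0 \<le> q"
  then have qp: "0 < q" using False by auto
  have "1 + (b - ln q) \<le> exp (b - ln q)" by (rule exp_ge_add_one_self)
  then have "q * (1 + (b - ln q)) \<le> q * exp (b - ln q)" using qp by (intro mult_left_mono) auto
  also have "q * exp (b - ln q) = exp b" using qp by (simp add: exp_diff)
  finally show ?thesis by (simp add: algebra_simps)
qed simp

lemma pointwise_bound:
  fixes x y :: R2 and q :: real
  assumes q: "0 \<le> q"
  shows "q * \<bar>ln (norm (x - y))\<bar> \<le> q * (1 + (norm x)\<^sup>2 + (norm y)\<^sup>2) + 2 * \<bar>q * ln q\<bar> + 2 * kern (x - y)"
proof -
  let ?t = "norm (x - y)"
  have k0: "0 \<le> kern (x - y)" by (rule kern_nonneg)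
  consider "?t = 0" | "?t \<ge> 1" | "0 < ?t \<and> ?t < 1" by force
  then show ?thesis
  proof cases
    case 1 then show ?thesis using q k0 by (simp add: add_nonneg_nonneg)
  next
    case 2
    have a1: "ln ?t \<le> ?t - 1" using 2 by (intro ln_le_minus_one) auto
    have a2: "?t \<le> norm x + norm y" by (rule norm_triangle_ineq4)
    have a3: "norm x \<le> (1 + (norm x)\<^sup>2) / 2" using sum_squares_ge_zero[of "norm x - 1" 0]
      by (simp add: power2_eq_square algebra_simps)
    have a4: "norm y \<le> (1 + (norm y)\<^sup>2) / 2" using sum_squares_ge_zero[of "norm y - 1" 0]
      by (simp add: power2_eq_square algebra_simps)
    have "ln ?t \<le> (1 + (norm x)\<^sup>2) / 2 + (1 + (norm y)\<^sup>2) / 2 - 1" using a1 a2 a3 a4 by linarith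
    moreover have "0 \<le> ln ?t" using 2 by simp
    moreover have "0 \<le> (norm x)\<^sup>2" "0 \<le> (norm y)\<^sup>2" by simp_all
    ultimately have "\<bar>ln ?t\<bar> \<le> 1 + (norm x)\<^sup>2 + (norm y)\<^sup>2" by (simp add: abs_of_nonneg field_simps)
    then have "q * \<bar>ln ?t\<bar> \<le> q * (1 + (norm x)\<^sup>2 + (norm y)\<^sup>2)" using q by (intro mult_left_mono)
    then show ?thesis using k0 by linarith
  next
    case 3
    have "q * (- ln ?t / 2) \<le> q * ln q - q + exp (- ln ?t / 2)" by (rule young[OF q])
    also have "exp (- ln ?t / 2) = ?t powr (-1/2)" using 3 by (simp add: powr_def)
    also have "\<dots> = kern (x - y)" using 3 by (simp add: kern_def)
    finally have "q * \<bar>ln ?t\<bar> \<le> 2 * (q * ln q) - 2 * q + 2 * kern (x - y)"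
      using 3 by (simp add: algebra_simps)
    moreover have "0 \<le> q * (1 + (norm x)\<^sup>2 + (norm y)\<^sup>2)" using q by simp
    ultimately show ?thesis using q by linarith
  qed
qed

lemma kern_shift_integrable: "integrable lborel (\<lambda>y. kern (x - y))"
  using integrable_eucl_affine[OF kern_integrable, of "-1" x] by simp

lemma kern_shift_integral: "(\<integral>y. kern (x - y) \<partial>lborel) = (\<integral>y. kern y \<partial>lborel)"
  using integral_eucl_affine[OF _ kern_integrable, of "-1" x] by simp

definition Bnd :: "(R2 \<Rightarrow> real) \<Rightarrow> R2 \<Rightarrow> R2 \<Rightarrow> real" where
  "Bnd q x y = q y * (1 + (norm x)\<^sup>2 + (norm y)\<^sup>2) + 2 * \<bar>q y * ln (q y)\<bar> + 2 * kern (x - y)"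

lemma Bnd_integrable:
  assumes "good q"
  shows "integrable lborel (Bnd q x)"
proof -
  from assms have [measurable]: "q \<in> borel_measurable lborel" and i1: "integrable lborel q"
    and i2: "integrable lborel (\<lambda>x. q x * ln (q x))" and i3: "integrable lborel (\<lambda>x. (norm x)\<^sup>2 * q x)"
    unfolding good_def by auto
  have e: "Bnd q x = (\<lambda>y. (1 + (norm x)\<^sup>2) * q y + (norm y)\<^sup>2 * q y + 2 * \<bar>q y * ln (q y)\<bar> + 2 * kern (x - y))"
    by (auto simp: Bnd_def algebra_simps fun_eq_iff)
  show ?thesis unfolding e
    using i1 i2 i3 kern_shift_integrable[of x]
    by (intro Bochner_Integration.integrable_add Bochner_Integration.integrable_mult_right integrable_abs) auto
qed

lemma Bnd_integral:
  assumes "good q"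
  shows "(\<integral>y. Bnd q x y \<partial>lborel) = (\<integral>y. q y \<partial>lborel) * (1 + (norm x)\<^sup>2) + ((\<integral>y. (norm y)\<^sup>2 * q y \<partial>lborel)
     + 2 * (\<integral>y. \<bar>q y * ln (q y)\<bar> \<partial>lborel) + 2 * (\<integral>y. kern y \<partial>lborel))"
proof -
  from assms have [measurable]: "q \<in> borel_measurable lborel" and i1: "integrable lborel q"
    and i2: "integrable lborel (\<lambda>x. q x * ln (q x))" and i3: "integrable lborel (\<lambda>x. (norm x)\<^sup>2 * q x)"
    unfolding good_def by auto
  have e: "Bnd q x = (\<lambda>y. (1 + (norm x)\<^sup>2) * q y + (norm y)\<^sup>2 * q y + 2 * \<bar>q y * ln (q y)\<bar> + 2 * kern (x - y))"
    by (auto simp: Bnd_def algebra_simps fun_eq_iff)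
  have i2': "integrable lborel (\<lambda>y. \<bar>q y * ln (q y)\<bar>)" using i2 by (rule integrable_abs)
  show ?thesis unfolding e
    using i1 i2' i3 kern_shift_integrable[of x]
    by (simp add: Bochner_Integration.integral_add Bochner_Integration.integrable_add
        kern_shift_integral algebra_simps)
qed

lemma interact_integrable:
  assumes gp: "good p" and gq: "good q"
  shows "integrable (lborel \<Otimes>\<^sub>M lborel) (\<lambda>z. p (fst z) * ln (norm (fst z - snd z)) * q (snd z))"
proof -
  from gp have [measurable]: "p \<in> borel_measurable borel" and p0: "\<And>x. 0 \<le> p x"
    and ip: "integrable lborel p" and ip2: "integrable lborel (\<lambda>x. (norm x)\<^sup>2 * p x)"
    unfolding good_def by auto
  from gq have [measurable]: "q \<in> borel_measurable borel" and q0: "\<And>x. 0 \<le> q x"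
    unfolding good_def by auto
  define F where "F = (\<lambda>z::R2\<times>R2. p (fst z) * ln (norm (fst z - snd z)) * q (snd z))"
  have Fm[measurable]: "F \<in> borel_measurable (lborel \<Otimes>\<^sub>M lborel)"
    unfolding F_def by measurable
  have ptw: "norm (F (x, y)) \<le> p x * Bnd q x y" for x y
  proof -
    have "norm (F (x, y)) = p x * (q y * \<bar>ln (norm (x - y))\<bar>)"
      using p0[of x] q0[of y] by (simp add: F_def abs_mult)
    also have "\<dots> \<le> p x * Bnd q x y"
      using pointwise_bound[OF q0[of y], of x y] p0[of x] unfolding Bnd_def
      by (intro mult_left_mono) auto
    finally show ?thesis .
  qed
  have intx: "integrable lborel (\<lambda>y. F (x, y))" for x
  proof (rule Bochner_Integration.integrable_bound)
    show "integrable lborel (\<lambda>y. p x * Bnd q x y)"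
      using Bnd_integrable[OF gq] by (rule Bochner_Integration.integrable_mult_right)
    show "(\<lambda>y. F (x, y)) \<in> borel_measurable lborel" by measurable
    show "AE y in lborel. norm (F (x, y)) \<le> norm (p x * Bnd q x y)"
      using ptw by (auto intro: order_trans[OF _ abs_ge_self])
  qed
  define D where "D = (\<integral>y. (norm y)\<^sup>2 * q y \<partial>lborel)
     + 2 * (\<integral>y. \<bar>q y * ln (q y)\<bar> \<partial>lborel) + 2 * (\<integral>y. kern y \<partial>lborel)"
  define b where "b = (\<integral>y. q y \<partial>lborel)"
  have ig: "integrable lborel (\<lambda>x. (b + D) * p x + b * ((norm x)\<^sup>2 * p x))"
    using ip ip2 by auto
  have I1: "integrable lborel (\<lambda>x. \<integral>y. norm (F (x, y)) \<partial>lborel)"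
  proof (rule Bochner_Integration.integrable_bound[OF ig])
    show "(\<lambda>x. \<integral>y. norm (F (x, y)) \<partial>lborel) \<in> borel_measurable lborel" by measurable
    show "AE x in lborel. norm (\<integral>y. norm (F (x, y)) \<partial>lborel) \<le> norm ((b + D) * p x + b * ((norm x)\<^sup>2 * p x))"
    proof (rule AE_I2)
      fix x
      have "(\<integral>y. norm (F (x, y)) \<partial>lborel) \<le> (\<integral>y. p x * Bnd q x y \<partial>lborel)"
        using intx[of x] Bnd_integrable[OF gq, of x] ptw
        by (intro integral_mono) auto
      also have "\<dots> = p x * (\<integral>y. Bnd q x y \<partial>lborel)" by simp
      also have "\<dots> = (b + D) * p x + b * ((norm x)\<^sup>2 * p x)"
        unfolding Bnd_integral[OF gq] b_def D_def by (simp add: algebra_simps)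
      finally have le: "(\<integral>y. norm (F (x, y)) \<partial>lborel) \<le> (b + D) * p x + b * ((norm x)\<^sup>2 * p x)" .
      have "0 \<le> (\<integral>y. norm (F (x, y)) \<partial>lborel)" by simp
      then show "norm (\<integral>y. norm (F (x, y)) \<partial>lborel) \<le> norm ((b + D) * p x + b * ((norm x)\<^sup>2 * p x))"
        using le by simp
    qed
  qed
  have "integrable (lborel \<Otimes>\<^sub>M lborel) F"
    by (rule lborel_pair.Fubini_integrable[OF Fm I1]) (use intx in auto)
  then show ?thesis unfolding F_def .
qed

definition dil :: "(R2 \<Rightarrow> real) \<Rightarrow> R2 \<Rightarrow> real" where
  "dil p x = 4 * p (2 *\<^sub>R x)"

lemma dimR2[simp]: "DIM(R2) = 2" by simp

lemma scal_integrable: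
  fixes f :: "R2 \<Rightarrow> real"
  assumes "integrable lborel f"
  shows "integrable lborel (\<lambda>x. f (2 *\<^sub>R x))"
  using integrable_eucl_affine[OF assms, of 2 0] by simp

lemma scal_integral:
  fixes f :: "R2 \<Rightarrow> real"
  assumes "integrable lborel f"
  shows "(\<integral>x. f (2 *\<^sub>R x) \<partial>lborel) = (\<integral>x. f x \<partial>lborel) / 4"
  using integral_eucl_affine[OF _ assms, of 2 0] by simp

lemma dil_mass:
  assumes "good p"
  shows "integrable lborel (dil p)" "(\<integral>x. dil p x \<partial>lborel) = (\<integral>x. p x \<partial>lborel)"
proof -
  have ip: "integrable lborel p" using assms by (simp add: good_def)
  show "integrable lborel (dil p)" unfolding dil_def using scal_integrable[OF ip] by simp
  show "(\<integral>x. dil p x \<partial>lborel) = (\<integral>x. p x \<partial>lborel)"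
    unfolding dil_def using scal_integral[OF ip] by simp
qed

lemma dil_ent:
  assumes "good p"
  shows "integrable lborel (\<lambda>x. dil p x * ln (dil p x))"
    "(\<integral>x. dil p x * ln (dil p x) \<partial>lborel) = ln 4 * (\<integral>x. p x \<partial>lborel) + (\<integral>x. p x * ln (p x) \<partial>lborel)"
proof -
  have ip: "integrable lborel p" and ie: "integrable lborel (\<lambda>x. p x * ln (p x))" and p0: "\<And>x. 0 \<le> p x"
    using assms by (auto simp: good_def)
  define g where "g = (\<lambda>w. ln 4 * p w + p w * ln (p w))"
  have ig: "integrable lborel g" unfolding g_def using ip ie by auto
  have e: "(\<lambda>x. dil p x * ln (dil p x)) = (\<lambda>x. 4 * g (2 *\<^sub>R x))"
  proof
    fix x
    show "dil p x * ln (dil p x) = 4 * g (2 *\<^sub>R x)"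
    proof (cases "p (2 *\<^sub>R x) = 0")
      case False
      then have "0 < p (2 *\<^sub>R x)" using p0 by (simp add: order_less_le)
      then show ?thesis by (simp add: dil_def g_def ln_mult algebra_simps)
    qed (simp add: dil_def g_def)
  qed
  show "integrable lborel (\<lambda>x. dil p x * ln (dil p x))"
    unfolding e using scal_integrable[OF ig] by simp
  show "(\<integral>x. dil p x * ln (dil p x) \<partial>lborel) = ln 4 * (\<integral>x. p x \<partial>lborel) + (\<integral>x. p x * ln (p x) \<partial>lborel)"
    unfolding e
  proof -
    have "(\<integral>x. 4 * g (2 *\<^sub>R x) \<partial>lborel) = 4 * (\<integral>x. g (2 *\<^sub>R x) \<partial>lborel)"
      by (rule integral_mult_right_zero)
    also have "\<dots> = (\<integral>x. g x \<partial>lborel)" using scal_integral[OF ig] by simp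
    also have "\<dots> = ln 4 * (\<integral>x. p x \<partial>lborel) + (\<integral>x. p x * ln (p x) \<partial>lborel)"
      unfolding g_def using ip ie by simp
    finally show "(\<integral>x. 4 * g (2 *\<^sub>R x) \<partial>lborel) = ln 4 * (\<integral>x. p x \<partial>lborel) + (\<integral>x. p x * ln (p x) \<partial>lborel)" .
  qed
qed

lemma dil_mom:
  assumes "good p"
  shows "integrable lborel (\<lambda>x. (norm x)\<^sup>2 * dil p x)"
    "(\<integral>x. (norm x)\<^sup>2 * dil p x \<partial>lborel) = (\<integral>x. (norm x)\<^sup>2 * p x \<partial>lborel) / 4"
proof -
  have im: "integrable lborel (\<lambda>x. (norm x)\<^sup>2 * p x)" using assms by (auto simp: good_def)
  have e: "(\<lambda>x. (norm x)\<^sup>2 * dil p x) = (\<lambda>x. (\<lambda>w. (norm w)\<^sup>2 * p w) (2 *\<^sub>R x))"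
    by (simp add: dil_def fun_eq_iff power2_eq_square)
  show "integrable lborel (\<lambda>x. (norm x)\<^sup>2 * dil p x)"
    unfolding e by (rule scal_integrable[OF im])
  show "(\<integral>x. (norm x)\<^sup>2 * dil p x \<partial>lborel) = (\<integral>x. (norm x)\<^sup>2 * p x \<partial>lborel) / 4"
    unfolding e by (rule scal_integral[OF im])
qed

lemma dil_good:
  assumes "good p" shows "good (dil p)"
proof -
  have [measurable]: "p \<in> borel_measurable borel" using assms by (simp add: good_def)
  show ?thesis unfolding good_def using dil_mass[OF assms] dil_ent[OF assms] dil_mom[OF assms] assms
    by (auto simp: dil_def good_def)
qed

lemma prod_integ:
  fixes p q :: "R2 \<Rightarrow> real"
  assumes ip: "integrable lborel p" and iq: "integrable lborel q"
  shows "integrable (lborel \<Otimes>\<^sub>M lborel) (\<lambda>z. p (fst z) * q (snd z))"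
    "(\<integral>z. p (fst z) * q (snd z) \<partial>(lborel \<Otimes>\<^sub>M lborel)) = (\<integral>x. p x \<partial>lborel) * (\<integral>x. q x \<partial>lborel)"
proof -
  have [measurable]: "p \<in> borel_measurable borel" "q \<in> borel_measurable borel"
    using ip iq by auto
  have m: "(\<lambda>z::R2\<times>R2. p (fst z) * q (snd z)) \<in> borel_measurable (lborel \<Otimes>\<^sub>M lborel)" by measurable
  have "integrable lborel (\<lambda>x. \<bar>p x\<bar> * (\<integral>y. \<bar>q y\<bar> \<partial>lborel))"
    using ip by (intro Bochner_Integration.integrable_mult_left integrable_abs)
  then have i1: "integrable lborel (\<lambda>x. \<integral>y. norm (p (fst (x,y)) * q (snd (x,y))) \<partial>lborel)"
    by (simp add: abs_mult)
  show I: "integrable (lborel \<Otimes>\<^sub>M lborel) (\<lambda>z. p (fst z) * q (snd z))"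
    by (rule lborel_pair.Fubini_integrable[OF m i1]) (use iq in auto)
  have "(\<integral>z. p (fst z) * q (snd z) \<partial>(lborel \<Otimes>\<^sub>M lborel)) = (\<integral>x. \<integral>y. p (fst (x,y)) * q (snd (x,y)) \<partial>lborel \<partial>lborel)"
    using lborel_pair.integral_fst'[OF I] by simp
  also have "\<dots> = (\<integral>x. p x \<partial>lborel) * (\<integral>x. q x \<partial>lborel)" by simp
  finally show "(\<integral>z. p (fst z) * q (snd z) \<partial>(lborel \<Otimes>\<^sub>M lborel)) = (\<integral>x. p x \<partial>lborel) * (\<integral>x. q x \<partial>lborel)" .
qed

lemma AE_offdiag: "AE z in (lborel \<Otimes>\<^sub>M lborel :: (R2 \<times> R2) measure). fst z \<noteq> snd z"
proof (rule lborel_pair.AE_pair_measure)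
  show "{x \<in> space (lborel \<Otimes>\<^sub>M lborel). fst x \<noteq> snd x} \<in> sets (lborel \<Otimes>\<^sub>M lborel :: (R2 \<times> R2) measure)"
    by measurable
  show "AE x in lborel. AE y in lborel. fst (x, y) \<noteq> snd (x::R2, y::R2)"
    using AE_lborel_singleton by (auto simp: eq_commute)
qed

lemma dil_interact:
  assumes gp: "good p" and gq: "good q"
  shows "(\<integral>z. dil p (fst z) * ln (norm (fst z - snd z)) * dil q (snd z) \<partial>(lborel \<Otimes>\<^sub>M lborel))
    = (\<integral>z. p (fst z) * ln (norm (fst z - snd z)) * q (snd z) \<partial>(lborel \<Otimes>\<^sub>M lborel))
      - ln 2 * ((\<integral>x. p x \<partial>lborel) * (\<integral>x. q x \<partial>lborel))"
proof -
  have ip: "integrable lborel p" and iq: "integrable lborel q" using gp gq by (auto simp: good_def)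
  define G where "G = (\<lambda>w::R2\<times>R2. p (fst w) * ln (norm (fst w - snd w)) * q (snd w) - ln 2 * (p (fst w) * q (snd w)))"
  have iG: "integrable (lborel \<Otimes>\<^sub>M lborel) G"
    unfolding G_def using interact_integrable[OF gp gq] prod_integ(1)[OF ip iq] by auto
  have intG: "(\<integral>w. G w \<partial>(lborel \<Otimes>\<^sub>M lborel)) = (\<integral>z. p (fst z) * ln (norm (fst z - snd z)) * q (snd z) \<partial>(lborel \<Otimes>\<^sub>M lborel))
      - ln 2 * ((\<integral>x. p x \<partial>lborel) * (\<integral>x. q x \<partial>lborel))"
    unfolding G_def using interact_integrable[OF gp gq] prod_integ[OF ip iq] by simp
  have iG': "integrable lborel G" using iG by (simp add: lborel_prod)
  have sc: "(\<integral>w. G w \<partial>lborel) = 16 * (\<integral>w. G (2 *\<^sub>R w) \<partial>lborel)"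
    using integral_eucl_affine[OF _ iG', of 2 0] by simp
  have ae: "AE z in lborel \<Otimes>\<^sub>M lborel. dil p (fst z) * ln (norm (fst z - snd z)) * dil q (snd z) = 16 * G (2 *\<^sub>R z)"
    using AE_offdiag
  proof (rule AE_mp, intro AE_I2 impI)
    fix z :: "R2 \<times> R2" assume ne: "fst z \<noteq> snd z"
    have "norm (2 *\<^sub>R fst z - 2 *\<^sub>R snd z) = 2 * norm (fst z - snd z)"
      by (simp add: scaleR_diff_right[symmetric])
    moreover have "0 < norm (fst z - snd z)" using ne by simp
    ultimately have "ln (norm (2 *\<^sub>R fst z - 2 *\<^sub>R snd z)) = ln 2 + ln (norm (fst z - snd z))"
      by (simp add: ln_mult)
    then show "dil p (fst z) * ln (norm (fst z - snd z)) * dil q (snd z) = 16 * G (2 *\<^sub>R z)"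
      by (simp add: G_def dil_def algebra_simps)
  qed
  have "(\<integral>z. dil p (fst z) * ln (norm (fst z - snd z)) * dil q (snd z) \<partial>(lborel \<Otimes>\<^sub>M lborel))
      = (\<integral>z. 16 * G (2 *\<^sub>R z) \<partial>(lborel \<Otimes>\<^sub>M lborel))"
    by (rule integral_cong_AE) (use gp gq ae in \<open>auto simp: good_def dil_def G_def\<close>)
  also have "\<dots> = 16 * (\<integral>w. G (2 *\<^sub>R w) \<partial>lborel)" by (simp add: lborel_prod)
  also have "\<dots> = (\<integral>w. G w \<partial>(lborel \<Otimes>\<^sub>M lborel))" using sc by (simp add: lborel_prod)
  finally show ?thesis using intG by simp
qed

lemma Gamma_good: "\<rho> \<in> Gamma n \<beta> \<Longrightarrow> i \<in> {1..n} \<Longrightarrow> good (\<rho> i)"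
  unfolding Gamma_def good_def by auto

lemma Gamma_mass: "\<rho> \<in> Gamma n \<beta> \<Longrightarrow> i \<in> {1..n} \<Longrightarrow> (\<integral>x. \<rho> i x \<partial>lborel) = \<beta> i"
  unfolding Gamma_def by auto

lemma mom_pos:
  assumes g: "good p" and m: "0 < (\<integral>x. p x \<partial>lborel)"
  shows "0 < (\<integral>x. (norm x)\<^sup>2 * p x \<partial>lborel)"
proof (rule ccontr)
  have [measurable]: "p \<in> borel_measurable borel" and p0: "\<And>x. 0 \<le> p x"
    and im: "integrable lborel (\<lambda>x. (norm x)\<^sup>2 * p x)" using g by (auto simp: good_def)
  assume "\<not> 0 < (\<integral>x. (norm x)\<^sup>2 * p x \<partial>lborel)"
  moreover have "0 \<le> (\<integral>x. (norm x)\<^sup>2 * p x \<partial>lborel)" using p0 by simp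
  ultimately have "(\<integral>x. (norm x)\<^sup>2 * p x \<partial>lborel) = 0" by simp
  then have "AE x in lborel. (norm x)\<^sup>2 * p x = 0"
    using integral_nonneg_eq_0_iff_AE[OF im] p0 by simp
  then have ae0: "AE x in lborel. p x = 0"
    using AE_lborel_singleton[of "0::R2"] by eventually_elim auto
  have "(\<integral>x. p x \<partial>lborel) = 0"
    using ae0 by (rule integral_eq_zero_AE)
  then show False using m by simp
qed

theorem lemma6:
  fixes n :: nat and a :: "nat \<Rightarrow> nat \<Rightarrow> real" and \<beta> :: "nat \<Rightarrow> real"
  assumes "n \<ge> 1"
    and "\<forall>i\<in>{1..n}. \<forall>j\<in>{1..n}. a i j = a j i"
    and "\<forall>i\<in>{1..n}. \<forall>j\<in>{1..n}. a i j \<ge> 0"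
    and "\<forall>i\<in>{1..n}. \<beta> i > 0"
    and "Lambda a {1..n} \<beta> = 0"
    and "\<forall>J. J \<noteq> {} \<and> J \<subset> {1..n} \<longrightarrow> Lambda a J \<beta> > 0"
  shows "\<not> (\<exists>\<rho>\<in>Gamma n \<beta>. \<forall>\<sigma>\<in>Gamma n \<beta>. F0 n a \<rho> \<le> F0 n a \<sigma>)"
proof
  assume "\<exists>\<rho>\<in>Gamma n \<beta>. \<forall>\<sigma>\<in>Gamma n \<beta>. F0 n a \<rho> \<le> F0 n a \<sigma>"
  then obtain \<rho> where r: "\<rho> \<in> Gamma n \<beta>" and min: "\<forall>\<sigma>\<in>Gamma n \<beta>. F0 n a \<rho> \<le> F0 n a \<sigma>" by blast
  define \<sigma> where "\<sigma> = (\<lambda>i. dil (\<rho> i))"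
  have g: "\<And>i. i \<in> {1..n} \<Longrightarrow> good (\<rho> i)" using Gamma_good[OF r] .
  have mass: "\<And>i. i \<in> {1..n} \<Longrightarrow> (\<integral>x. \<rho> i x \<partial>lborel) = \<beta> i" using Gamma_mass[OF r] .
  have sG: "\<sigma> \<in> Gamma n \<beta>"
    unfolding Gamma_def
  proof (intro CollectI ballI)
    fix i assume i: "i \<in> {1..n}"
    have "good (\<sigma> i)" unfolding \<sigma>_def using dil_good[OF g[OF i]] .
    then show "\<sigma> i \<in> borel_measurable lborel \<and> (\<forall>x. 0 \<le> \<sigma> i x) \<and>
      integrable lborel (\<lambda>x. \<sigma> i x * ln (\<sigma> i x)) \<and> integrable lborel (\<lambda>x. (norm x)\<^sup>2 * \<sigma> i x) \<and>
      integrable lborel (\<sigma> i) \<and> (\<integral>x. \<sigma> i x \<partial>lborel) = \<beta> i"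
      unfolding good_def \<sigma>_def using dil_mass(2)[OF g[OF i]] mass[OF i] by auto
  qed
  define E where "E = (\<lambda>i. \<integral>x. \<rho> i x * ln (\<rho> i x) \<partial>lborel)"
  define M where "M = (\<lambda>i. \<integral>x. (norm x)\<^sup>2 * \<rho> i x \<partial>lborel)"
  define I where "I = (\<lambda>i j. \<integral>z. \<rho> i (fst z) * ln (norm (fst z - snd z)) * \<rho> j (snd z) \<partial>(lborel \<Otimes>\<^sub>M lborel))"
  have S1: "(\<Sum>i\<in>{1..n}. \<integral>x. \<sigma> i x * ln (\<sigma> i x) \<partial>lborel) = (\<Sum>i\<in>{1..n}. E i) + ln 4 * (\<Sum>i\<in>{1..n}. \<beta> i)"
  proof -
    have "(\<Sum>i\<in>{1..n}. \<integral>x. \<sigma> i x * ln (\<sigma> i x) \<partial>lborel) = (\<Sum>i\<in>{1..n}. E i + ln 4 * \<beta> i)"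
      by (rule sum.cong) (auto simp: \<sigma>_def E_def dil_ent(2)[OF g] mass)
    then show ?thesis by (simp add: sum.distrib sum_distrib_left)
  qed
  have S2: "(\<Sum>i\<in>{1..n}. \<Sum>j\<in>{1..n}. a i j * (\<integral>z. \<sigma> i (fst z) * ln (norm (fst z - snd z)) * \<sigma> j (snd z) \<partial>(lborel \<Otimes>\<^sub>M lborel)))
    = (\<Sum>i\<in>{1..n}. \<Sum>j\<in>{1..n}. a i j * I i j) - ln 2 * (\<Sum>i\<in>{1..n}. \<Sum>j\<in>{1..n}. \<beta> i * a i j * \<beta> j)"
  proof -
    have "(\<Sum>i\<in>{1..n}. \<Sum>j\<in>{1..n}. a i j * (\<integral>z. \<sigma> i (fst z) * ln (norm (fst z - snd z)) * \<sigma> j (snd z) \<partial>(lborel \<Otimes>\<^sub>M lborel)))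
      = (\<Sum>i\<in>{1..n}. \<Sum>j\<in>{1..n}. a i j * I i j - ln 2 * (\<beta> i * a i j * \<beta> j))"
      unfolding \<sigma>_def by (intro sum.cong refl) (subst dil_interact[OF g g]; auto simp: I_def mass algebra_simps)
    then show ?thesis by (simp add: sum_subtractf sum_distrib_left)
  qed
  have S3: "(\<Sum>i\<in>{1..n}. 1/2 * (\<integral>x. (norm x)\<^sup>2 * \<sigma> i x \<partial>lborel)) = (\<Sum>i\<in>{1..n}. 1/2 * M i) - 3/8 * (\<Sum>i\<in>{1..n}. M i)"
  proof -
    have "(\<Sum>i\<in>{1..n}. 1/2 * (\<integral>x. (norm x)\<^sup>2 * \<sigma> i x \<partial>lborel)) = (\<Sum>i\<in>{1..n}. 1/2 * M i - 3/8 * M i)"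
      by (rule sum.cong) (auto simp: \<sigma>_def M_def dil_mom(2)[OF g])
    also have "\<dots> = (\<Sum>i\<in>{1..n}. 1/2 * M i) - 3/8 * (\<Sum>i\<in>{1..n}. M i)"
      by (simp only: sum_subtractf sum_distrib_left)
    finally show ?thesis .
  qed
  have L: "8 * pi * (\<Sum>i\<in>{1..n}. \<beta> i) = (\<Sum>i\<in>{1..n}. \<Sum>j\<in>{1..n}. \<beta> i * a i j * \<beta> j)"
  proof -
    have "0 = (\<Sum>i\<in>{1..n}. \<beta> i * (8 * pi - (\<Sum>j\<in>{1..n}. a i j * \<beta> j)))"
      using assms(5) by (simp add: Lambda_def)
    also have "\<dots> = (\<Sum>i\<in>{1..n}. 8 * pi * \<beta> i - (\<Sum>j\<in>{1..n}. \<beta> i * a i j * \<beta> j))"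
      by (intro sum.cong refl) (simp add: right_diff_distrib sum_distrib_left algebra_simps)
    finally show ?thesis by (simp add: sum_subtractf sum_distrib_left)
  qed
  have Mpos: "0 < (\<Sum>i\<in>{1..n}. M i)"
  proof -
    have one: "1 \<in> {1..n}" using assms(1) by simp
    have "0 < M 1" unfolding M_def
      using mom_pos[OF g[OF one]] mass[OF one] assms(4) one by simp
    moreover have "M 1 \<le> (\<Sum>i\<in>{1..n}. M i)"
      by (rule member_le_sum[OF one]) (auto simp: M_def intro!: integral_nonneg_AE AE_I2
          simp: g[THEN good_def[THEN iffD1]])
    ultimately show ?thesis by linarith
  qed
  have ln4: "ln (4::real) = 2 * ln 2"
    using ln_mult[of 2 2] by simp
  have F0s: "F0 n a \<sigma> = F0 n a \<rho> - 3/8 * (\<Sum>i\<in>{1..n}. M i)"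
  proof -
    have "F0 n a \<sigma> = ((\<Sum>i\<in>{1..n}. E i) + ln 4 * (\<Sum>i\<in>{1..n}. \<beta> i))
       + 1 / (4 * pi) * ((\<Sum>i\<in>{1..n}. \<Sum>j\<in>{1..n}. a i j * I i j) - ln 2 * (\<Sum>i\<in>{1..n}. \<Sum>j\<in>{1..n}. \<beta> i * a i j * \<beta> j))
       + ((\<Sum>i\<in>{1..n}. 1/2 * M i) - 3/8 * (\<Sum>i\<in>{1..n}. M i))"
      unfolding F0_def S1 S2 S3 ..
    moreover have "F0 n a \<rho> = (\<Sum>i\<in>{1..n}. E i) + 1 / (4 * pi) * (\<Sum>i\<in>{1..n}. \<Sum>j\<in>{1..n}. a i j * I i j)
       + (\<Sum>i\<in>{1..n}. 1/2 * M i)"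
      unfolding F0_def E_def I_def M_def ..
    moreover have K: "1 / (4 * pi) * ((\<Sum>i\<in>{1..n}. \<Sum>j\<in>{1..n}. a i j * I i j) - ln 2 * (\<Sum>i\<in>{1..n}. \<Sum>j\<in>{1..n}. \<beta> i * a i j * \<beta> j))
        = 1 / (4 * pi) * (\<Sum>i\<in>{1..n}. \<Sum>j\<in>{1..n}. a i j * I i j) - 2 * ln 2 * (\<Sum>i\<in>{1..n}. \<beta> i)"
      unfolding L[symmetric] by (simp add: field_simps)
    ultimately show ?thesis unfolding ln4 by linarith
  qed
  have "F0 n a \<rho> \<le> F0 n a \<sigma>" using min sG by blast
  then show False using F0s Mpos by linarith
qed

end
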